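(* Let $n\ge p$, let $\mathcal X\in\mathrm{St}(n,p,l)$, and let $\hat{\mathcal X}=L(\mathcal X)$. For each $i\in\{1,\dots,l\}$ let $\hat X^{(i)}_\perp\in\mathbb C^{n\times(n-p)}$ be any matrix whose column space is the orthogonal complement (in $\mathbb C^n$) of the column space of $\hat X^{(i)}$, let $\hat{\mathcal X}_\perp$ be the complex tensor with frontal slices $\hat X^{(i)}_\perp$, and let $\mathcal X_\perp=L^{-1}(\hat{\mathcal X}_\perp)$. Then the tangent space of the embedded submanifold $\mathrm{St}(n,p,l)\subset\mathbb R^{n\times p\times l}$ at $\mathcal X$ is $$T_{\mathcal X}\mathrm{St}(n,p,l)=\Big\{\mathcal X*\mathcal W+\mathcal X_\perp*\mathcal B\in\mathbb R^{n\times p\times l}\ :\ \mathcal W\in\mathbb R^{p\times p\times l}\text{ skew-symmetric},\ \mathcal B\in\mathbb R^{(n-p)\times p\times l}\Big\}.$$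
   Context: For $\mathcal A\in\mathbb R^{n\times p\times l}$ (or complex), $A^{(i)}=\mathcal A(:,:,i)$ are its frontal slices. $\operatorname{bcirc}(\mathcal A)$ is the $nl\times pl$ block circulant matrix whose $(i,j)$ block is $A^{(((i-j)\bmod l)+1)}$; $\operatorname{unfold}(\mathcal A)$ stacks $A^{(1)},\dots,A^{(l)}$ vertically, $\operatorname{fold}$ is its inverse. The t-product is $\mathcal A*\mathcal B=\operatorname{fold}(\operatorname{bcirc}(\mathcal A)\operatorname{unfold}(\mathcal B))$ for $\mathcal A$ of size $n\times p\times l$, $\mathcal B$ of size $p\times m\times l$. The transpose $\mathcal A^\top\in\mathbb R^{p\times n\times l}$ has frontal slices $(A^{(1)})^\top,(A^{(l)})^\top,\dots,(A^{(2)})^\top$. The identity tensor $\mathcal I$ has first frontal slice the identity matrix and other slices zero. $\mathrm{St}(n,p,l)=\{\mathcal X\in\mathbb R^{n\times p\times l}:\mathcal X^\top*\mathcal X=\mathcal I\}$ ($n\ge p$), an embedded submanifold of $\mathbb R^{n\times p\times l}$. A tensor $\mathcal W\in\mathbb R^{p\times p\times l}$ is skew-symmetric if $\mathcal W^\top=-\mathcal W$. The discrete Fourier transform $L(\mathcal A)=\hat{\mathcal A}\in\mathbb C^{n\times p\times l}$ has frontal slices $\hat A^{(k)}=\sum_{j=1}^l\omega^{(k-1)(j-1)}A^{(j)}$, $\omega=e^{-2\pi\mathrm i/l}$, and $L^{-1}$ is its inverse; $\mathcal C=\mathcal A*\mathcal B$ iff $\hat C^{(k)}=\hat A^{(k)}\hat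 B^{(k)}$ for all $k$. *)

theory Defs
  imports Complex_Main
begin

text \<open>Third-order tensors are represented as functions of three (0-based) indices.
  A tensor "of size n x p x l" is one that vanishes outside {0..<n} x {0..<p} x {0..<l}.
  Frontal slice number k (0-based) is the matrix (\<lambda>i j. A i j k).\<close>

type_synonym 'a tensor = "nat \<Rightarrow> nat \<Rightarrow> nat \<Rightarrow> 'a"

definition tens :: "nat \<Rightarrow> nat \<Rightarrow> nat \<Rightarrow> ('a::zero) tensor \<Rightarrow> bool" where
  "tens n p l A \<longleftrightarrow> (\<forall>i j k. (n \<le> i \<or> p \<le> j \<or> l \<le> k) \<longrightarrow> A i j k = 0)"

text \<open>t-product A * B = fold (bcirc A * unfold B), A of size n x p x l, B of size p x m x l.
  Slice k of the result is the sum over s of A^((k - s) mod l) B^(s) (0-based).\<close>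
definition tprod :: "nat \<Rightarrow> nat \<Rightarrow> ('a::comm_semiring_0) tensor \<Rightarrow> 'a tensor \<Rightarrow> 'a tensor" where
  "tprod p l A B = (\<lambda>i j k. if k < l then
      (\<Sum>s<l. \<Sum>q<p. A i q ((k + l - s) mod l) * B q j s) else 0)"

definition tadd :: "('a::plus) tensor \<Rightarrow> 'a tensor \<Rightarrow> 'a tensor" where
  "tadd A B = (\<lambda>i j k. A i j k + B i j k)"

text \<open>Tensor transpose: slices (A^(1))^T, (A^(l))^T, ..., (A^(2))^T.\<close>
definition ttrans :: "nat \<Rightarrow> ('a::zero) tensor \<Rightarrow> 'a tensor" where
  "ttrans l A = (\<lambda>i j k. if k < l then A j i ((l - k) mod l) else 0)"

definition tident :: "nat \<Rightarrow> ('a::{zero,one}) tensor" where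
  "tident p = (\<lambda>i j k. if i < p \<and> j = i \<and> k = 0 then 1 else 0)"

definition skew_tensor :: "nat \<Rightarrow> nat \<Rightarrow> real tensor \<Rightarrow> bool" where
  "skew_tensor p l W \<longleftrightarrow> tens p p l W \<and> ttrans l W = (\<lambda>i j k. - W i j k)"

definition Stiefel :: "nat \<Rightarrow> nat \<Rightarrow> nat \<Rightarrow> real tensor set" where
  "Stiefel n p l = {X. tens n p l X \<and> tprod n l (ttrans l X) X = tident p}"

definition omega :: "nat \<Rightarrow> complex" where
  "omega l = cis (- 2 * pi / real l)"

definition DFT :: "nat \<Rightarrow> real tensor \<Rightarrow> complex tensor" where
  "DFT l A = (\<lambda>i j k. if k < l then (\<Sum>s<l. omega l ^ (k * s) * complex_of_real (A i j s)) else 0)"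

definition iDFT :: "nat \<Rightarrow> complex tensor \<Rightarrow> complex tensor" where
  "iDFT l A = (\<lambda>i j k. if k < l then
      (1 / of_nat l) * (\<Sum>s<l. cnj (omega l) ^ (k * s) * A i j s) else 0)"

text \<open>Vectors of C^n are functions nat => complex vanishing from index n on.\<close>
definition colspace :: "nat \<Rightarrow> nat \<Rightarrow> (nat \<Rightarrow> nat \<Rightarrow> complex) \<Rightarrow> (nat \<Rightarrow> complex) set" where
  "colspace n m M = {v. \<exists>c::nat \<Rightarrow> complex.
      v = (\<lambda>i. if i < n then (\<Sum>j<m. M i j * c j) else 0)}"

definition orth_compl :: "nat \<Rightarrow> (nat \<Rightarrow> complex) set \<Rightarrow> (nat \<Rightarrow> complex) set" where
  "orth_compl n S = {v. (\<forall>i\<ge>n. v i = 0) \<and> (\<forall>u\<in>S. (\<Sum>i<n. cnj (u i) * v i) = 0)}"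

text \<open>Tangent space of a subset M of the (finite-dimensional) space of real tensors at X:
  the set of velocities at 0 of smooth (C^infinity, componentwise) curves in M through X.\<close>
definition smooth_on_interval :: "real \<Rightarrow> (real \<Rightarrow> real) \<Rightarrow> bool" where
  "smooth_on_interval e f \<longleftrightarrow> (\<exists>D::nat \<Rightarrow> real \<Rightarrow> real. D 0 = f \<and>
      (\<forall>m. \<forall>t\<in>{-e<..<e}. (D m has_real_derivative D (Suc m) t) (at t)))"

definition tangent_space :: "real tensor set \<Rightarrow> real tensor \<Rightarrow> real tensor set" where
  "tangent_space M X = {V. \<exists>(\<gamma>::real \<Rightarrow> real tensor) e. e > 0 \<and> \<gamma> 0 = X \<and>
      (\<forall>t\<in>{-e<..<e}. \<gamma> t \<in> M) \<and>
      (\<forall>i j k. smooth_on_interval e (\<lambda>t. \<gamma> t i j k) \<and>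
               ((\<lambda>t. \<gamma> t i j k) has_real_derivative V i j k) (at 0))}"

end

theory Submission
  imports Defs
begin


lemma omega_pow: "omega l ^ m = cis (- 2 * pi * real m / real l)"
  unfolding omega_def DeMoivre by (simp add: field_simps)

lemma omega_pow_eq1_iff:
  assumes "1 \<le> l" shows "omega l ^ m = 1 \<longleftrightarrow> l dvd m"
proof
  assume h: "omega l ^ m = 1"
  hence "cos (- 2 * pi * real m / real l) = 1"
    unfolding omega_pow by (metis complex.sel(1) cis.sel(1) one_complex.sel(1))
  then obtain n :: int where n: "- 2 * pi * real m / real l = real_of_int n * 2 * pi"
    using cos_one_2pi_int by metis
  have "pi * real m = pi * (- n * real l)" using n assms by (simp add: field_simps)
  hence "real m = - n * real l" using pi_gt_zero by (metis mult_cancel_left pi_neq_zero)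
  hence "int m = - n * int l" by (metis of_int_eq_iff of_int_minus of_int_mult of_int_of_nat_eq)
  hence "int l dvd int m" by simp
  thus "l dvd m" by simp
next
  assume "l dvd m"
  then obtain c where "m = l * c" by auto
  hence "omega l ^ m = cis (2 * pi * real_of_int (- int c))" unfolding omega_pow using assms
    by (simp add: field_simps)
  also have "\<dots> = 1" by (rule cis_multiple_2pi) simp
  finally show "omega l ^ m = 1" .
qed

lemma omega_cnj_mult: "cnj (omega l) * omega l = 1"
  unfolding omega_def by (simp add: cis_cnj cis_mult)

lemma omega_pow_mod: assumes "1 \<le> l" shows "omega l ^ (x mod l) = omega l ^ x"
proof -
  have "omega l ^ x = omega l ^ (l * (x div l) + x mod l)" by simp
  also have "\<dots> = (omega l ^ l) ^ (x div l) * omega l ^ (x mod l)" by (simp only: power_add power_mult)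
  also have "omega l ^ l = 1" using omega_pow_eq1_iff[OF assms] by simp
  finally show ?thesis by simp
qed

lemma orth_sum:
  assumes l: "1 \<le> l" and "u < l" "k < l"
  shows "(\<Sum>s<l. (omega l ^ u * cnj (omega l) ^ k) ^ s) = (if u = k then of_nat l else 0)"
proof (cases "u = k")
  case True
  have "omega l ^ u * cnj (omega l) ^ k = 1" using True omega_cnj_mult[of l]
    by (metis mult.commute power_mult_distrib power_one)
  thus ?thesis using True by simp
next
  case False
  define z where "z = omega l ^ u * cnj (omega l) ^ k"
  have ol: "omega l ^ l = 1" using omega_pow_eq1_iff[OF l] by simp
  have cl: "cnj (omega l) ^ l = 1" using ol by (metis complex_cnj_one complex_cnj_power)
  have zl: "z ^ l = 1" unfolding z_def power_mult_distrib
    by (simp add: power_mult[symmetric] mult.commute[of _ l]) (simp add: power_mult ol cl)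
  have "z \<noteq> 1"
  proof (cases "k < u")
    case True
    have "z = omega l ^ (u - k) * (omega l ^ k * cnj (omega l) ^ k)"
      unfolding z_def using True by (simp add: power_add[symmetric] mult.assoc)
    also have "omega l ^ k * cnj (omega l) ^ k = 1" using omega_cnj_mult[of l]
      by (metis mult.commute power_mult_distrib power_one)
    finally have "z = omega l ^ (u - k)" by simp
    moreover have "\<not> l dvd (u - k)" using True assms by (simp add: nat_dvd_not_less)
    ultimately show ?thesis using omega_pow_eq1_iff[OF l] by simp
  next
    case False2: False
    with False have ku: "u < k" by simp
    have "z = cnj (omega l) ^ (k - u) * (omega l ^ u * cnj (omega l) ^ u)"
      unfolding z_def using ku by (simp add: power_add[symmetric] mult_ac)
    also have "omega l ^ u * cnj (omega l) ^ u = 1" using omega_cnj_mult[of l]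
      by (metis mult.commute power_mult_distrib power_one)
    finally have "z = cnj (omega l ^ (k - u))" by simp
    moreover have "\<not> l dvd (k - u)" using ku assms by (simp add: nat_dvd_not_less)
    ultimately show ?thesis using omega_pow_eq1_iff[OF l] by (metis complex_cnj_one_iff)
  qed
  hence "(\<Sum>s<l. z ^ s) = 0" using zl by (simp add: geometric_sum)
  thus ?thesis using False unfolding z_def by simp
qed



definition cf :: "nat \<Rightarrow> complex tensor \<Rightarrow> complex tensor" where
  "cf l A = (\<lambda>i j k. if k < l then (\<Sum>s<l. omega l ^ (k * s) * A i j s) else 0)"

definition slc :: "nat \<Rightarrow> ('a::zero) tensor \<Rightarrow> bool" where
  "slc l A \<longleftrightarrow> (\<forall>i j k. l \<le> k \<longrightarrow> A i j k = 0)"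

definition RR :: "real tensor \<Rightarrow> complex tensor" where
  "RR A = (\<lambda>i j k. complex_of_real (A i j k))"

lemma DFT_cf: "DFT l A = cf l (RR A)"
  unfolding DFT_def cf_def RR_def by simp

lemma pow_swap: "cnj (omega l) ^ (k * s) * omega l ^ (s * u) = (omega l ^ u * cnj (omega l) ^ k) ^ s"
  by (simp add: power_mult_distrib power_mult[symmetric] mult.commute)

lemma pow_swap2: "omega l ^ (k * s) * cnj (omega l) ^ (s * u) = (omega l ^ k * cnj (omega l) ^ u) ^ s"
  by (simp add: power_mult_distrib power_mult[symmetric] mult.commute)

lemma iDFT_cf:
  assumes l: "1 \<le> l" and A: "slc l A"
  shows "iDFT l (cf l A) = A"
proof (intro ext)
  fix i j k
  show "iDFT l (cf l A) i j k = A i j k"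
  proof (cases "k < l")
    case True
    have "(\<Sum>s<l. cnj (omega l) ^ (k * s) * cf l A i j s)
        = (\<Sum>s<l. \<Sum>u<l. A i j u * (cnj (omega l) ^ (k * s) * omega l ^ (s * u)))"
      unfolding cf_def by (simp add: sum_distrib_left mult_ac)
    also have "\<dots> = (\<Sum>u<l. A i j u * (\<Sum>s<l. (omega l ^ u * cnj (omega l) ^ k) ^ s))"
      by (subst sum.swap) (simp add: pow_swap sum_distrib_left)
    also have "\<dots> = (\<Sum>u<l. if u = k then A i j u * of_nat l else 0)"
      by (intro sum.cong refl) (simp add: orth_sum[OF l _ True])
    also have "\<dots> = A i j k * of_nat l" using True by simp
    finally show ?thesis using True l unfolding iDFT_def by simp
  next
    case False thus ?thesis using A unfolding iDFT_def slc_def by simp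
  qed
qed

lemma cf_iDFT:
  assumes l: "1 \<le> l" and A: "slc l A"
  shows "cf l (iDFT l A) = A"
proof (intro ext)
  fix i j k
  show "cf l (iDFT l A) i j k = A i j k"
  proof (cases "k < l")
    case True
    have "(\<Sum>s<l. omega l ^ (k * s) * iDFT l A i j s)
        = (1 / of_nat l) * (\<Sum>s<l. \<Sum>u<l. A i j u * (omega l ^ (k * s) * cnj (omega l) ^ (s * u)))"
      unfolding iDFT_def by (simp add: sum_distrib_left mult_ac)
    also have "(\<Sum>s<l. \<Sum>u<l. A i j u * (omega l ^ (k * s) * cnj (omega l) ^ (s * u)))
         = (\<Sum>u<l. A i j u * (\<Sum>s<l. (omega l ^ k * cnj (omega l) ^ u) ^ s))"
      by (subst sum.swap) (simp add: pow_swap2 sum_distrib_left)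
    also have "\<dots> = (\<Sum>u<l. if u = k then A i j u * of_nat l else 0)"
      by (intro sum.cong refl) (auto simp add: orth_sum[OF l True])
    also have "\<dots> = A i j k * of_nat l" using True by simp
    finally show ?thesis using True l unfolding cf_def by simp
  next
    case False thus ?thesis using A unfolding cf_def slc_def by simp
  qed
qed

lemma cf_inj:
  assumes "1 \<le> l" "slc l A" "slc l B" "cf l A = cf l B"
  shows "A = B"
  by (metis assms iDFT_cf)

lemma shift_reindex:
  assumes l: "1 \<le> l" and s: "s < l"
  shows "(\<Sum>t<l. omega l ^ (k * t) * g ((t + l - s) mod l)) = omega l ^ (k * s) * (\<Sum>u<l. omega l ^ (k * u) * g u)"
proof -
  have "(\<Sum>t<l. omega l ^ (k * t) * g ((t + l - s) mod l)) = (\<Sum>u<l. omega l ^ (k * ((u + s) mod l)) * g u)"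
  proof (rule sum.reindex_bij_witness[where i = "\<lambda>u. (u + s) mod l" and j = "\<lambda>t. (t + l - s) mod l"])
    fix u assume "u \<in> {..<l}"
    thus "((u + s) mod l + l - s) mod l = u" using s
      by (cases "u + s < l") (auto simp: mod_if le_mod_geq)
  next
    fix u assume "u \<in> {..<l}"
    thus "(u + s) mod l \<in> {..<l}" using l by simp
  next
    fix t assume "t \<in> {..<l}"
    thus "((t + l - s) mod l + s) mod l = t" using s
      by (cases "t < s") (auto simp: mod_if le_mod_geq)
  next
    fix t assume "t \<in> {..<l}"
    thus "(t + l - s) mod l \<in> {..<l}" using l by simp
  next
    fix t assume "t \<in> {..<l}"
    thus "omega l ^ (k * ((((t + l - s) mod l) + s) mod l)) * g ((t + l - s) mod l) =
          omega l ^ (k * t) * g ((t + l - s) mod l)"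
      using s by (cases "t < s") (auto simp: mod_if le_mod_geq)
  qed
  also have "\<dots> = (\<Sum>u<l. omega l ^ (k * s) * (omega l ^ (k * u) * g u))"
  proof (intro sum.cong refl)
    fix u
    have "omega l ^ (k * ((u + s) mod l)) = (omega l ^ ((u + s) mod l)) ^ k" by (simp only: power_mult[symmetric] mult.commute)
    also have "\<dots> = (omega l ^ (u + s)) ^ k" using omega_pow_mod[OF l] by simp
    also have "\<dots> = omega l ^ (k * s) * omega l ^ (k * u)"
      by (simp add: power_mult[symmetric] power_add[symmetric] algebra_simps)
    finally show "omega l ^ (k * ((u + s) mod l)) * g u = omega l ^ (k * s) * (omega l ^ (k * u) * g u)"
      by simp
  qed
  finally show ?thesis by (simp add: sum_distrib_left)
qed

lemma cf_tprod:
  assumes l: "1 \<le> l"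
  shows "cf l (tprod p l A B) i j k = (if k < l then (\<Sum>q<p. cf l A i q k * cf l B q j k) else 0)"
proof (cases "k < l")
  case True
  have "(\<Sum>t<l. omega l ^ (k * t) * tprod p l A B i j t)
      = (\<Sum>t<l. omega l ^ (k * t) * (\<Sum>s<l. \<Sum>q<p. A i q ((t + l - s) mod l) * B q j s))"
    unfolding tprod_def by (intro sum.cong refl) simp
  also have "\<dots> = (\<Sum>s<l. \<Sum>q<p. B q j s * (\<Sum>t<l. omega l ^ (k * t) * A i q ((t + l - s) mod l)))"
    by (simp add: sum_distrib_left sum_distrib_right mult_ac) (subst sum.swap, subst (2) sum.swap, rule refl)
  also have "\<dots> = (\<Sum>s<l. \<Sum>q<p. B q j s * (omega l ^ (k * s) * cf l A i q k))"
    using True by (intro sum.cong refl) (simp add: shift_reindex[OF l] cf_def)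
  also have "\<dots> = (\<Sum>q<p. cf l A i q k * cf l B q j k)"
    using True unfolding cf_def by (subst sum.swap) (simp add: sum_distrib_left mult_ac)
  finally show ?thesis using True unfolding cf_def by simp
qed (simp add: cf_def)



lemma slc_tprod: "slc l (tprod p l A B)" unfolding slc_def tprod_def by simp
lemma slc_ttrans: "slc l (ttrans l A)" unfolding slc_def ttrans_def by simp
lemma slc_RR: "slc l A \<Longrightarrow> slc l (RR A)" unfolding slc_def RR_def by simp
lemma RR_inj: assumes "RR A = RR B" shows "A = B"
proof (intro ext)
  fix i j k
  have "complex_of_real (A i j k) = complex_of_real (B i j k)"
    using fun_cong[OF fun_cong[OF fun_cong[OF assms, of i], of j], of k] unfolding RR_def .
  thus "A i j k = B i j k" by simp
qed
lemma tens_slc: "tens n p l A \<Longrightarrow> slc l A" unfolding tens_def slc_def by simp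

lemma RR_tprod: "RR (tprod p l A B) = tprod p l (RR A) (RR B)"
  unfolding RR_def tprod_def by (intro ext) simp

lemma RR_ttrans: "RR (ttrans l A) = ttrans l (RR A)"
  unfolding RR_def ttrans_def by (intro ext) simp

lemma tprod_assoc_c:
  fixes A B C :: "complex tensor"
  assumes l: "1 \<le> l"
  shows "tprod m l (tprod p l A B) C = tprod p l A (tprod m l B C)"
proof (rule cf_inj[OF l slc_tprod slc_tprod], intro ext)
  fix i j k
  show "cf l (tprod m l (tprod p l A B) C) i j k = cf l (tprod p l A (tprod m l B C)) i j k"
    unfolding cf_tprod[OF l]
    apply (simp add: sum_distrib_left sum_distrib_right mult_ac)
    apply (subst sum.swap)
    apply simp
    done
qed

lemma tprod_assoc:
  fixes A B C :: "real tensor"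
  assumes l: "1 \<le> l"
  shows "tprod m l (tprod p l A B) C = tprod p l A (tprod m l B C)"
  by (rule RR_inj) (simp add: RR_tprod tprod_assoc_c[OF l])

lemma ttrans_mod:
  fixes u l :: nat
  assumes "u < l" shows "(l - (l - u) mod l) mod l = u"
  using assms by (cases "u = 0") (auto simp: mod_if)

lemma omega_pow_neg:
  assumes l: "1 \<le> l" and u: "u < l"
  shows "omega l ^ (k * ((l - u) mod l)) = cnj (omega l ^ (k * u))"
proof -
  have "omega l ^ (k * ((l - u) mod l)) = (omega l ^ ((l - u) mod l)) ^ k"
    by (simp only: power_mult[symmetric] mult.commute)
  also have "\<dots> = (omega l ^ (l - u)) ^ k" using omega_pow_mod[OF l] by simp
  also have "omega l ^ (l - u) = cnj (omega l) ^ u"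
  proof -
    have "omega l ^ (l - u) = omega l ^ (l - u) * (omega l ^ u * cnj (omega l) ^ u)"
      using omega_cnj_mult[of l] by (metis mult.commute mult_1_right power_mult_distrib power_one)
    also have "\<dots> = omega l ^ l * cnj (omega l) ^ u" using u
      by (simp add: mult.assoc[symmetric] power_add[symmetric])
    also have "omega l ^ l = 1" using omega_pow_eq1_iff[OF l] by simp
    finally show ?thesis by simp
  qed
  finally show ?thesis by (simp add: power_mult[symmetric] mult.commute)
qed

lemma cf_RR_ttrans:
  assumes l: "1 \<le> l"
  shows "cf l (RR (ttrans l A)) i j k = (if k < l then cnj (cf l (RR A) j i k) else 0)"
proof (cases "k < l")
  case True
  have "(\<Sum>s<l. omega l ^ (k * s) * RR (ttrans l A) i j s)
      = (\<Sum>s<l. omega l ^ (k * s) * complex_of_real (A j i ((l - s) mod l)))"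
    unfolding RR_def ttrans_def by (intro sum.cong refl) simp
  also have "\<dots> = (\<Sum>u<l. omega l ^ (k * ((l - u) mod l)) * complex_of_real (A j i u))"
  proof (rule sum.reindex_bij_witness[where i = "\<lambda>u. (l - u) mod l" and j = "\<lambda>u. (l - u) mod l"])
    fix u assume "u \<in> {..<l}" thus "(l - (l - u) mod l) mod l = u" by (simp add: ttrans_mod)
  next
    fix u assume "u \<in> {..<l}" thus "(l - u) mod l \<in> {..<l}" using l by simp
  next
    fix u assume "u \<in> {..<l}" thus "(l - (l - u) mod l) mod l = u" by (simp add: ttrans_mod)
  next
    fix u assume "u \<in> {..<l}" thus "(l - u) mod l \<in> {..<l}" using l by simp
  next
    fix s assume "s \<in> {..<l}"
    thus "omega l ^ (k * ((l - (l - s) mod l) mod l)) * complex_of_real (A j i ((l - s) mod l)) =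
          omega l ^ (k * s) * complex_of_real (A j i ((l - s) mod l))"
      by (simp add: ttrans_mod)
  qed
  also have "\<dots> = (\<Sum>u<l. cnj (omega l ^ (k * u) * complex_of_real (A j i u)))"
    by (intro sum.cong refl) (simp add: omega_pow_neg[OF l])
  also have "\<dots> = cnj (cf l (RR A) j i k)" using True unfolding cf_def RR_def by simp
  finally show ?thesis using True unfolding cf_def by simp
qed (simp add: cf_def)

lemma ttrans_tprod:
  fixes A B :: "real tensor"
  assumes l: "1 \<le> l"
  shows "ttrans l (tprod p l A B) = tprod p l (ttrans l B) (ttrans l A)"
proof (rule RR_inj, rule cf_inj[OF l slc_RR[OF slc_ttrans] slc_RR[OF slc_tprod]], intro ext)
  fix i j k
  show "cf l (RR (ttrans l (tprod p l A B))) i j k = cf l (RR (tprod p l (ttrans l B) (ttrans l A))) i j k"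
    unfolding cf_RR_ttrans[OF l] RR_tprod cf_tprod[OF l]
    by (simp add: RR_tprod[symmetric] cf_RR_ttrans[OF l] mult.commute)
qed

lemma ttrans_ttrans: "slc l A \<Longrightarrow> ttrans l (ttrans l A) = A"
  unfolding ttrans_def slc_def by (intro ext) (auto simp: ttrans_mod)

lemma shift_zero:
  fixes s k l :: nat
  assumes "s < l" "k < l" shows "(k + l - s) mod l = 0 \<longleftrightarrow> s = k"
proof (cases "s \<le> k")
  case True
  hence "k + l - s = (k - s) + l" by simp
  hence "(k + l - s) mod l = (k - s) mod l" by (simp only: mod_add_self2)
  hence "(k + l - s) mod l = k - s" using assms by (simp only: mod_less)
  thus ?thesis using True by auto
next
  case False
  hence "(k + l - s) mod l = k + l - s" using assms by simp
  thus ?thesis using False assms by auto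
qed

lemma mult_if01: "(if c then 1 else 0) * (a::'a::comm_ring_1) = (if c then a else 0)"
  "a * (if c then 1 else 0) = (if c then a else 0)" by simp_all

lemma tident_left:
  fixes A :: "'a::comm_ring_1 tensor"
  assumes l: "1 \<le> l" and A: "slc l A" "\<forall>i j k. p \<le> i \<longrightarrow> A i j k = 0"
  shows "tprod p l (tident p) A = A"
proof (intro ext)
  fix i j k
  show "tprod p l (tident p) A i j k = A i j k"
  proof (cases "k < l")
    case True
    have "tprod p l (tident p) A i j k = (\<Sum>s<l. if s = k then (\<Sum>q<p. if q = i then (if i < p then A q j s else 0) else 0) else 0)"
      unfolding tprod_def tident_def if_P[OF True]
      using True by (intro sum.cong refl) (auto simp: shift_zero mult_if01 sum.delta)
    also have "\<dots> = (if i < p then A i j k else 0)" using True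
      by (simp add: sum.delta')
    also have "\<dots> = A i j k" using A by auto
    finally show ?thesis .
  qed (use A in \<open>simp add: tprod_def slc_def\<close>)
qed

lemma tident_right:
  fixes A :: "'a::comm_ring_1 tensor"
  assumes l: "1 \<le> l" and A: "slc l A" "\<forall>i j k. p \<le> j \<longrightarrow> A i j k = 0"
  shows "tprod p l A (tident p) = A"
proof (intro ext)
  fix i j k
  show "tprod p l A (tident p) i j k = A i j k"
  proof (cases "k < l")
    case True
    have "tprod p l A (tident p) i j k = (\<Sum>s<l. if s = 0 then (\<Sum>q<p. if q = j then (if j < p then A i q k else 0) else 0) else 0)"
      unfolding tprod_def tident_def if_P[OF True]
      using True by (intro sum.cong refl) (auto simp: mult_if01 sum.delta)
    also have "\<dots> = (if j < p then A i j k else 0)" using True l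
      by (simp add: sum.delta')
    also have "\<dots> = A i j k" using A by auto
    finally show ?thesis .
  qed (use A in \<open>simp add: tprod_def slc_def\<close>)
qed

lemma tprod_add_left: "tprod p l (tadd A B) C = tadd (tprod p l A C) (tprod p l B C)"
  unfolding tprod_def tadd_def by (intro ext) (simp add: sum.distrib distrib_right)
lemma tprod_add_right: "tprod p l A (tadd B C) = tadd (tprod p l A B) (tprod p l A C)"
  unfolding tprod_def tadd_def by (intro ext) (simp add: sum.distrib distrib_left)
lemma tprod_neg_left: "tprod p l (\<lambda>i j k. - (A i j k :: real)) C = (\<lambda>i j k. - tprod p l A C i j k)"
  unfolding tprod_def by (intro ext) (simp add: sum_negf)
lemma tprod_neg_right: "tprod p l A (\<lambda>i j k. - (C i j k :: real)) = (\<lambda>i j k. - tprod p l A C i j k)"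
  unfolding tprod_def by (intro ext) (simp add: sum_negf)
lemma tprod_zero_left: "tprod p l (\<lambda>i j k. 0) C = (\<lambda>i j k. 0)"
  unfolding tprod_def by (intro ext) simp
lemma tprod_zero_right: "tprod p l A (\<lambda>i j k. 0) = (\<lambda>i j k. 0)"
  unfolding tprod_def by (intro ext) simp
lemma ttrans_add: "ttrans l (tadd A (B :: real tensor)) = tadd (ttrans l A) (ttrans l B)"
  unfolding ttrans_def tadd_def by (intro ext) simp
lemma ttrans_neg: "ttrans l (\<lambda>i j k. - (A i j k :: real)) = (\<lambda>i j k. - ttrans l A i j k)"
  unfolding ttrans_def by (intro ext) simp



lemma cf_zero: "cf l (\<lambda>i j k. 0) = (\<lambda>i j k. 0)" unfolding cf_def by (intro ext) simp
lemma RR_zero: "RR (\<lambda>i j k. 0) = (\<lambda>i j k. 0)" unfolding RR_def by simp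
lemma slc_zero: "slc l (\<lambda>i j k. 0)" unfolding slc_def by simp

lemma cf_zero_imp:
  assumes "1 \<le> l" "slc l Z" "cf l (RR Z) = (\<lambda>i j k. 0)" shows "Z = (\<lambda>i j k. 0)"
proof -
  have "RR Z = RR (\<lambda>i j k. 0)"
    by (rule cf_inj[OF assms(1) slc_RR[OF assms(2)] slc_RR[OF slc_zero]]) (simp only: assms(3) RR_zero cf_zero)
  thus ?thesis by (rule RR_inj)
qed

lemma RR_Xp:
  assumes "\<forall>i j k. Im (iDFT l Xh i j k) = 0"
  shows "RR (\<lambda>i j k. Re (iDFT l Xh i j k)) = iDFT l Xh"
  unfolding RR_def using assms by (intro ext) (simp add: complex_eq_iff)

lemma cf_RR_Xp:
  assumes "1 \<le> l" "\<forall>i j k. Im (iDFT l Xh i j k) = 0" "tens n m l Xh"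
  shows "cf l (RR (\<lambda>i j k. Re (iDFT l Xh i j k))) = Xh"
  using RR_Xp[OF assms(2)] cf_iDFT[OF assms(1) tens_slc[OF assms(3)]] by simp

lemma DFT_tens:
  assumes "tens n p l X" shows "n \<le> i \<or> p \<le> j \<Longrightarrow> DFT l X i j k = 0"
  using assms unfolding DFT_def tens_def by auto

lemma col_in_colspace:
  assumes "j < m"
  shows "(\<lambda>q. if q < n then M q j else 0) \<in> colspace n m M"
  unfolding colspace_def
proof (intro CollectI exI[of _ "\<lambda>q'. if q' = j then 1 else 0"])
  show "(\<lambda>q. if q < n then M q j else 0) = (\<lambda>i. if i < n then \<Sum>q'<m. M i q' * (if q' = j then 1 else 0) else 0)"
    using assms by (intro ext) (simp add: mult_if01 sum.delta)
qed

lemma F1: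
  assumes l: "1 \<le> l" and X: "tens n p l X" and Xh: "tens n (n - p) l Xh"
    and col: "\<forall>k<l. colspace n (n - p) (\<lambda>i j. Xh i j k)
                = orth_compl n (colspace n p (\<lambda>i j. DFT l X i j k))"
    and im: "\<forall>i j k. Im (iDFT l Xh i j k) = 0"
  shows "tprod n l (ttrans l X) (\<lambda>i j k. Re (iDFT l Xh i j k)) = (\<lambda>i j k. 0)"
proof (rule cf_zero_imp[OF l slc_tprod], intro ext)
  fix i j k
  define Xp where "Xp = (\<lambda>i j k. Re (iDFT l Xh i j k))"
  show "cf l (RR (tprod n l (ttrans l X) (\<lambda>i j k. Re (iDFT l Xh i j k)))) i j k = 0"
  proof (cases "k < l")
    case True
    have "cf l (RR (tprod n l (ttrans l X) Xp)) i j k = (\<Sum>q<n. cnj (DFT l X q i k) * Xh q j k)"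
      unfolding RR_tprod cf_tprod[OF l] RR_ttrans[symmetric] cf_RR_ttrans[OF l]
      unfolding Xp_def cf_RR_Xp[OF l im Xh] using True by (simp add: DFT_cf)
    also have "\<dots> = 0"
    proof (cases "i < p \<and> j < n - p")
      case True2: True
      have "(\<lambda>q. if q < n then Xh q j k else 0) \<in> colspace n (n - p) (\<lambda>a b. Xh a b k)"
        using col_in_colspace[of j "n - p" n "\<lambda>a b. Xh a b k"] True2 by simp
      hence v: "(\<lambda>q. if q < n then Xh q j k else 0) \<in> orth_compl n (colspace n p (\<lambda>a b. DFT l X a b k))"
        using col True by simp
      have u: "(\<lambda>q. if q < n then DFT l X q i k else 0) \<in> colspace n p (\<lambda>a b. DFT l X a b k)"
        using col_in_colspace[of i p n "\<lambda>a b. DFT l X a b k"] True2 by simp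
      have "\<forall>w\<in>colspace n p (\<lambda>a b. DFT l X a b k). (\<Sum>q<n. cnj (w q) * (if q < n then Xh q j k else 0)) = 0"
        using v unfolding orth_compl_def by simp
      from bspec[OF this u] show ?thesis by simp
    next
      case False
      have z: "cnj (DFT l X q i k) * Xh q j k = 0" for q
        using False DFT_tens[OF X, of q i k] Xh unfolding tens_def by auto
      show ?thesis by (rule sum.neutral, intro ballI z)
    qed
    finally show ?thesis unfolding Xp_def .
  qed (simp add: cf_def)
qed

lemma F2:
  assumes l: "1 \<le> l" and X: "tens n p l X" and Xh: "tens n (n - p) l Xh"
    and col: "\<forall>k<l. colspace n (n - p) (\<lambda>i j. Xh i j k)
                = orth_compl n (colspace n p (\<lambda>i j. DFT l X i j k))"
    and im: "\<forall>i j k. Im (iDFT l Xh i j k) = 0"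
    and U: "tens n p l U" and XU: "tprod n l (ttrans l X) U = (\<lambda>i j k. 0)"
  shows "\<exists>B. tens (n - p) p l B \<and> tprod (n - p) l (\<lambda>i j k. Re (iDFT l Xh i j k)) B = U"
proof -
  define Xp where "Xp = (\<lambda>i j k. Re (iDFT l Xh i j k))"
  define Uh where "Uh = DFT l U"
  have orth: "(\<Sum>q<n. cnj (DFT l X q i k) * Uh q j k) = 0" if k: "k < l" for i j k
  proof -
    have "cf l (RR (tprod n l (ttrans l X) U)) i j k = (\<Sum>q<n. cnj (DFT l X q i k) * Uh q j k)"
      unfolding RR_tprod cf_tprod[OF l] RR_ttrans[symmetric] cf_RR_ttrans[OF l]
      unfolding Uh_def using k by (simp add: DFT_cf)
    thus ?thesis unfolding XU RR_zero cf_zero by simp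
  qed
  have ex: "\<exists>c. \<forall>i. Uh i j k = (\<Sum>q<n - p. Xh i q k * c q)" if k: "k < l" for j k
  proof -
    have "(\<lambda>i. if i < n then Uh i j k else 0) \<in> orth_compl n (colspace n p (\<lambda>a b. DFT l X a b k))"
      unfolding orth_compl_def
    proof (intro CollectI conjI allI impI ballI)
      fix u assume "u \<in> colspace n p (\<lambda>a b. DFT l X a b k)"
      then obtain c where c: "u = (\<lambda>i. if i < n then \<Sum>q<p. DFT l X i q k * c q else 0)"
        unfolding colspace_def by blast
      have "(\<Sum>i<n. cnj (u i) * (if i < n then Uh i j k else 0))
          = (\<Sum>i<n. \<Sum>q<p. cnj (c q) * (cnj (DFT l X i q k) * Uh i j k))"
        unfolding c by (simp add: sum_distrib_right sum_distrib_left mult_ac)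
      also have "\<dots> = (\<Sum>q<p. cnj (c q) * (\<Sum>i<n. cnj (DFT l X i q k) * Uh i j k))"
        by (subst sum.swap) (simp add: sum_distrib_left)
      also have "\<dots> = 0" using orth[OF k] by simp
      finally show "(\<Sum>i<n. cnj (u i) * (if i < n then Uh i j k else 0)) = 0" .
    qed simp
    hence "(\<lambda>i. if i < n then Uh i j k else 0) \<in> colspace n (n - p) (\<lambda>a b. Xh a b k)"
      using col k by simp
    then obtain c where c: "(\<lambda>i. if i < n then Uh i j k else 0) = (\<lambda>i. if i < n then \<Sum>q<n - p. Xh i q k * c q else 0)"
      unfolding colspace_def by blast
    have "Uh i j k = (\<Sum>q<n - p. Xh i q k * c q)" for i
    proof (cases "i < n")
      case True thus ?thesis using fun_cong[OF c, of i] by simp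
    next
      case False thus ?thesis using DFT_tens[OF U, of i] Xh unfolding Uh_def tens_def by simp
    qed
    thus ?thesis by blast
  qed
  define Bh where "Bh = (\<lambda>q j k. if k < l \<and> j < p \<and> q < n - p then
      (SOME c. \<forall>i. Uh i j k = (\<Sum>q<n - p. Xh i q k * c q)) q else 0)"
  have UhB: "Uh i j k = (\<Sum>q<n - p. Xh i q k * Bh q j k)" if k: "k < l" for i j k
  proof (cases "j < p")
    case True
    have "Uh i j k = (\<Sum>q<n - p. Xh i q k * (SOME c. \<forall>i. Uh i j k = (\<Sum>q<n - p. Xh i q k * c q)) q)"
      using someI_ex[OF ex[OF k, of j]] by blast
    also have "\<dots> = (\<Sum>q<n - p. Xh i q k * Bh q j k)"
      unfolding Bh_def using k True by (intro sum.cong refl) simp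
    finally show ?thesis .
  next
    case False thus ?thesis using DFT_tens[OF U, of i j k] unfolding Uh_def Bh_def by simp
  qed
  have slcB: "slc l Bh" unfolding slc_def Bh_def by simp
  define Bc where "Bc = iDFT l Bh"
  have cfB: "cf l Bc = Bh" unfolding Bc_def by (rule cf_iDFT[OF l slcB])
  have RXp: "RR Xp = iDFT l Xh" unfolding Xp_def by (rule RR_Xp[OF im])
  have "tprod (n - p) l (RR Xp) Bc = RR U"
  proof (rule cf_inj[OF l slc_tprod slc_RR[OF tens_slc[OF U]]], intro ext)
    fix i j k
    show "cf l (tprod (n - p) l (RR Xp) Bc) i j k = cf l (RR U) i j k"
      unfolding cf_tprod[OF l] cfB using cf_RR_Xp[OF l im Xh] UhB[of k i j]
      unfolding Xp_def Uh_def DFT_cf by (simp add: cf_def)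
  qed
  define B where "B = (\<lambda>i j k. Re (Bc i j k))"
  have f1: "tprod (n - p) l Xp B = U"
  proof (intro ext)
    fix i j k
    have "tprod (n - p) l Xp B i j k = Re (tprod (n - p) l (RR Xp) Bc i j k)"
      unfolding tprod_def B_def RR_def by simp
    also have "\<dots> = U i j k" using \<open>tprod (n - p) l (RR Xp) Bc = RR U\<close> unfolding RR_def by simp
    finally show "tprod (n - p) l Xp B i j k = U i j k" .
  qed
  have f2: "tens (n - p) p l B"
    unfolding tens_def
  proof (intro allI impI)
    fix i j k assume h: "n - p \<le> i \<or> p \<le> j \<or> l \<le> k"
    show "B i j k = 0"
    proof (cases "l \<le> k")
      case True thus ?thesis unfolding B_def Bc_def iDFT_def by simp
    next
      case False
      hence hh: "n - p \<le> i \<or> p \<le> j" using h by simp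
      have z: "Bh i j s = 0" for s using hh unfolding Bh_def by auto
      show ?thesis unfolding B_def Bc_def iDFT_def z by simp
    qed
  qed
  have "\<exists>B. tens (n - p) p l B \<and> tprod (n - p) l Xp B = U" using f2 f1 by blast
  thus ?thesis by (simp only: Xp_def)
qed



section \<open>Smoothness\<close>

lemma smooth_const: "smooth_on_interval e (\<lambda>t. c)"
  unfolding smooth_on_interval_def
  by (rule exI[of _ "\<lambda>m t. if m = 0 then c else 0"]) (auto intro: derivative_eq_intros)

lemma smooth_add:
  assumes "smooth_on_interval e f" "smooth_on_interval e g"
  shows "smooth_on_interval e (\<lambda>t. f t + g t)"
proof -
  obtain D where D: "D 0 = f" "\<forall>m. \<forall>t\<in>{-e<..<e}. (D m has_real_derivative D (Suc m) t) (at t)"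
    using assms(1) unfolding smooth_on_interval_def by blast
  obtain E where E: "E 0 = g" "\<forall>m. \<forall>t\<in>{-e<..<e}. (E m has_real_derivative E (Suc m) t) (at t)"
    using assms(2) unfolding smooth_on_interval_def by blast
  show ?thesis unfolding smooth_on_interval_def
  proof (intro exI[of _ "\<lambda>m t. D m t + E m t"] conjI allI ballI)
    fix m t assume t: "t \<in> {-e<..<e}"
    show "((\<lambda>t. D m t + E m t) has_real_derivative D (Suc m) t + E (Suc m) t) (at t)"
      using D(2) E(2) t by (intro DERIV_add) auto
  qed (use D E in simp)
qed

lemma smooth_cmult:
  assumes "smooth_on_interval e f"
  shows "smooth_on_interval e (\<lambda>t. f t * c)"
proof -
  obtain D where D: "D 0 = f" "\<forall>m. \<forall>t\<in>{-e<..<e}. (D m has_real_derivative D (Suc m) t) (at t)"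
    using assms(1) unfolding smooth_on_interval_def by blast
  show ?thesis unfolding smooth_on_interval_def
  proof (intro exI[of _ "\<lambda>m t. D m t * c"] conjI allI ballI)
    fix m t assume t: "t \<in> {-e<..<e}"
    show "((\<lambda>t. D m t * c) has_real_derivative D (Suc m) t * c) (at t)"
      using D(2) t by (intro DERIV_cmult_right) auto
  qed (use D in simp)
qed

lemma smooth_sum:
  assumes "finite S" "\<And>x. x \<in> S \<Longrightarrow> smooth_on_interval e (f x)"
  shows "smooth_on_interval e (\<lambda>t. \<Sum>x\<in>S. f x t)"
  using assms
proof (induction S rule: finite_induct)
  case empty thus ?case by (simp add: smooth_const)
next
  case (insert a S)
  thus ?case by (simp add: smooth_add)
qed

section \<open>Power series with exponential-type coefficients\<close>

definition fs :: "(nat \<Rightarrow> real) \<Rightarrow> nat \<Rightarrow> real \<Rightarrow> real" where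
  "fs a r t = (\<Sum>m. a (m + r) / fact m * t ^ m)"

lemma fs_summable:
  fixes a :: "nat \<Rightarrow> real" and C y :: real
  assumes C: "\<And>m. \<bar>a m\<bar> \<le> C ^ m" and C0: "0 \<le> C"
  shows "summable (\<lambda>m. a (m + r) / fact m * y ^ m)"
proof (rule summable_comparison_test[OF _ summable_mult[OF summable_exp[of "C * \<bar>y\<bar>"], of "C ^ r"]])
  show "\<exists>N. \<forall>m\<ge>N. norm (a (m + r) / fact m * y ^ m) \<le> C ^ r * (inverse (fact m) * (C * \<bar>y\<bar>) ^ m)"
  proof (intro exI allI impI)
    fix m
    have "norm (a (m + r) / fact m * y ^ m) = \<bar>a (m + r)\<bar> * (inverse (fact m) * \<bar>y\<bar> ^ m)"
      by (simp add: abs_mult power_abs divide_inverse)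
    also have "\<dots> \<le> C ^ (m + r) * (inverse (fact m) * \<bar>y\<bar> ^ m)"
      by (rule mult_right_mono[OF C]) simp
    also have "\<dots> = C ^ r * (inverse (fact m) * (C * \<bar>y\<bar>) ^ m)"
      by (simp add: power_add power_mult_distrib)
    finally show "norm (a (m + r) / fact m * y ^ m) \<le> C ^ r * (inverse (fact m) * (C * \<bar>y\<bar>) ^ m)" .
  qed
qed

lemma fs_deriv:
  assumes C: "\<And>m. \<bar>a m\<bar> \<le> C ^ m" and C0: "0 \<le> C"
  shows "(fs a r has_real_derivative fs a (Suc r) t) (at t)"
proof -
  define c where "c = (\<lambda>m. a (m + r) / fact m)"
  have "((\<lambda>x. \<Sum>m. c m * x ^ m) has_real_derivative (\<Sum>m. diffs c m * t ^ m)) (at t)"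
    by (rule termdiffs_strong_converges_everywhere) (unfold c_def, rule fs_summable[OF C C0])
  moreover have "diffs c m = a (m + Suc r) / fact m" for m
    unfolding diffs_def c_def by (simp add: fact_Suc field_simps del: of_nat_Suc)
  moreover have "fs a r = (\<lambda>x. \<Sum>m. c m * x ^ m)" by (intro ext) (simp add: fs_def c_def)
  moreover have "fs a (Suc r) t = (\<Sum>m. a (m + Suc r) / fact m * t ^ m)" by (simp add: fs_def)
  ultimately show ?thesis by simp
qed

lemma fs_smooth:
  assumes C: "\<And>m. \<bar>a m\<bar> \<le> C ^ m" and C0: "0 \<le> C"
  shows "smooth_on_interval e (fs a 0)"
  unfolding smooth_on_interval_def
  by (rule exI[of _ "fs a"]) (simp add: fs_deriv[OF C C0])

lemma fs_zero: "fs a 0 0 = a 0"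
  unfolding fs_def using powser_zero[of "\<lambda>m. a m / fact m"] by simp



primrec tpow :: "nat \<Rightarrow> nat \<Rightarrow> real tensor \<Rightarrow> nat \<Rightarrow> real tensor" where
  "tpow n l A 0 = tident n"
| "tpow n l A (Suc m) = tprod n l A (tpow n l A m)"

lemma abs_le_box:
  fixes A :: "real tensor"
  assumes "tens n p l A"
  shows "\<bar>A i j k\<bar> \<le> (\<Sum>i'<n. \<Sum>j'<p. \<Sum>k'<l. \<bar>A i' j' k'\<bar>)"
proof (cases "i < n \<and> j < p \<and> k < l")
  case True
  have "\<bar>A i j k\<bar> \<le> (\<Sum>k'<l. \<bar>A i j k'\<bar>)"
    using True by (intro member_le_sum[where f = "\<lambda>k'. \<bar>A i j k'\<bar>"]) auto
  also have "\<dots> \<le> (\<Sum>j'<p. \<Sum>k'<l. \<bar>A i j' k'\<bar>)"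
    using True by (intro member_le_sum[where f = "\<lambda>j'. \<Sum>k'<l. \<bar>A i j' k'\<bar>"]) (auto intro: sum_nonneg)
  also have "\<dots> \<le> (\<Sum>i'<n. \<Sum>j'<p. \<Sum>k'<l. \<bar>A i' j' k'\<bar>)"
    using True by (intro member_le_sum[where f = "\<lambda>i'. \<Sum>j'<p. \<Sum>k'<l. \<bar>A i' j' k'\<bar>"]) (auto intro: sum_nonneg)
  finally show ?thesis .
next
  case False
  hence "A i j k = 0" using assms unfolding tens_def by auto
  thus ?thesis by (simp add: sum_nonneg)
qed

lemma tpow_bound:
  assumes A: "tens n n l A"
  defines "C \<equiv> real n * real l * (\<Sum>i'<n. \<Sum>j'<n. \<Sum>k'<l. \<bar>A i' j' k'\<bar>) + 1"
  shows "\<bar>tpow n l A m i j k\<bar> \<le> C ^ m"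
proof (induction m arbitrary: i j k)
  case 0
  show ?case by (simp add: tident_def)
next
  case (Suc m)
  define M where "M = (\<Sum>i'<n. \<Sum>j'<n. \<Sum>k'<l. \<bar>A i' j' k'\<bar>)"
  have M0: "0 \<le> M" unfolding M_def by (simp add: sum_nonneg)
  have C1: "real l * (real n * (M * C ^ m)) \<le> C ^ Suc m"
  proof -
    have "real l * (real n * (M * C ^ m)) = (real n * real l * M) * C ^ m" by simp
    also have "\<dots> \<le> C * C ^ m"
      by (rule mult_right_mono) (auto simp: C_def M_def[symmetric] M0)
    finally show ?thesis by simp
  qed
  have "\<bar>tpow n l A (Suc m) i j k\<bar> \<le> (\<Sum>s<l. \<Sum>q<n. \<bar>A i q ((k + l - s) mod l)\<bar> * \<bar>tpow n l A m q j s\<bar>)"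
  proof (cases "k < l")
    case True thus ?thesis
      by (auto simp: tprod_def abs_mult intro!: order_trans[OF sum_abs] sum_mono)
  qed (simp add: tprod_def sum_nonneg)
  also have "\<dots> \<le> (\<Sum>s<l. \<Sum>q<n. M * C ^ m)"
    by (intro sum_mono mult_mono) (use abs_le_box[OF A] Suc M0 in \<open>auto simp: M_def\<close>)
  also have "\<dots> \<le> C ^ Suc m" using C1 by simp
  finally show ?case .
qed

lemma tpow_C0:
  "0 \<le> real n * real l * (\<Sum>i'<n. \<Sum>j'<n. \<Sum>k'<l. \<bar>A i' j' k'\<bar>) + 1"
  by (intro add_nonneg_nonneg mult_nonneg_nonneg) (auto intro: sum_nonneg)

lemma tpow_rows: "tens n n l A \<Longrightarrow> n \<le> i \<Longrightarrow> tpow n l A m i j k = 0"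
  by (cases m) (auto simp: tident_def tprod_def tens_def)

definition Eexp :: "nat \<Rightarrow> nat \<Rightarrow> real tensor \<Rightarrow> real \<Rightarrow> real tensor" where
  "Eexp n l A t = (\<lambda>i j k. fs (\<lambda>m. tpow n l A m i j k) 0 t)"

lemma Eexp_zero: "Eexp n l A 0 = tident n"
  unfolding Eexp_def by (intro ext) (simp add: fs_zero)

lemma Eexp_rows: "tens n n l A \<Longrightarrow> n \<le> i \<Longrightarrow> Eexp n l A t i j k = 0"
  unfolding Eexp_def fs_def by (simp add: tpow_rows)

lemma Eexp_smooth: "tens n n l A \<Longrightarrow> smooth_on_interval e (\<lambda>t. Eexp n l A t i j k)"
  unfolding Eexp_def by (rule fs_smooth[OF tpow_bound tpow_C0])

lemma Eexp_deriv:
  assumes A: "tens n n l A"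
  shows "((\<lambda>t. Eexp n l A t i j k) has_real_derivative tprod n l A (Eexp n l A t) i j k) (at t)"
proof -
  have d: "((\<lambda>t. Eexp n l A t i j k) has_real_derivative fs (\<lambda>m. tpow n l A m i j k) 1 t) (at t)"
    unfolding Eexp_def using fs_deriv[OF tpow_bound[OF A] tpow_C0, where r=0 and t=t] by simp
  have sm: "summable (\<lambda>m. tpow n l A m q j s / fact m * t ^ m)" for q s
    using fs_summable[OF tpow_bound[OF A] tpow_C0, where r=0 and y=t] by simp
  have "fs (\<lambda>m. tpow n l A m i j k) 1 t = tprod n l A (Eexp n l A t) i j k"
  proof (cases "k < l")
    case True
    have "fs (\<lambda>m. tpow n l A m i j k) 1 t
        = (\<Sum>m. \<Sum>s<l. \<Sum>q<n. A i q ((k + l - s) mod l) * (tpow n l A m q j s / fact m * t ^ m))"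
      unfolding fs_def using True
      by (simp add: tprod_def sum_distrib_left sum_distrib_right sum_divide_distrib mult_ac)
    also have "\<dots> = (\<Sum>s<l. \<Sum>q<n. \<Sum>m. A i q ((k + l - s) mod l) * (tpow n l A m q j s / fact m * t ^ m))"
      by (subst suminf_sum, (intro summable_sum summable_mult sm)?, subst suminf_sum, (intro summable_mult sm)?, rule refl)
    also have "\<dots> = (\<Sum>s<l. \<Sum>q<n. A i q ((k + l - s) mod l) * (\<Sum>m. tpow n l A m q j s / fact m * t ^ m))"
      by (intro sum.cong refl) (rule suminf_mult[OF sm])
    also have "\<dots> = tprod n l A (Eexp n l A t) i j k"
      unfolding tprod_def Eexp_def fs_def using True by simp
    finally show ?thesis .
  qed (simp add: fs_def tprod_def)
  with d show ?thesis by simp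
qed

lemma tprod_deriv:
  assumes G: "\<And>i j k. ((\<lambda>t. G t i j k) has_real_derivative G' i j k) (at x)"
      and H: "\<And>i j k. ((\<lambda>t. H t i j k) has_real_derivative H' i j k) (at x)"
  shows "((\<lambda>t. tprod p l (G t) (H t) i j k) has_real_derivative
           tadd (tprod p l G' (H x)) (tprod p l (G x) H') i j k) (at x)"
proof (cases "k < l")
  case True
  have "((\<lambda>t. \<Sum>s<l. \<Sum>q<p. G t i q ((k + l - s) mod l) * H t q j s) has_real_derivative
      (\<Sum>s<l. \<Sum>q<p. G' i q ((k + l - s) mod l) * H x q j s + H' q j s * G x i q ((k + l - s) mod l))) (at x)"
    by (intro DERIV_sum DERIV_mult G H)
  thus ?thesis using True unfolding tprod_def tadd_def
    by (simp add: sum.distrib mult.commute)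
next
  case False thus ?thesis unfolding tprod_def tadd_def by simp
qed

lemma ttrans_deriv:
  assumes G: "\<And>i j k. ((\<lambda>t. G t i j k) has_real_derivative G' i j k) (at x)"
  shows "((\<lambda>t. ttrans l (G t) i j k) has_real_derivative ttrans l G' i j k) (at x)"
  unfolding ttrans_def by (cases "k < l") (simp_all add: G)



lemma tens_tprod:
  assumes "\<forall>i j k. n \<le> i \<longrightarrow> A i j k = 0" "\<forall>i j k. m \<le> j \<longrightarrow> B i j k = 0"
  shows "tens n m l (tprod p l A B)"
  using assms unfolding tens_def tprod_def by auto

lemma deriv_locconst:
  fixes f :: "real \<Rightarrow> real"
  assumes e: "0 < e" and c: "\<forall>t\<in>{-e<..<e}. f t = c" and d: "(f has_real_derivative d) (at 0)"
  shows "d = 0"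
proof -
  have "((\<lambda>t. c) has_real_derivative 0) (at 0)" by simp
  hence "(f has_real_derivative 0) (at 0)"
    by (rule has_field_derivative_transform_within_open[of _ _ _ "{-e<..<e}"]) (use e c in auto)
  thus ?thesis using d DERIV_unique by blast
qed

lemma tangent_nec:
  assumes V: "V \<in> tangent_space (Stiefel n p l) X"
  shows "tens n p l V \<and> (\<forall>i j k. tprod n l (ttrans l V) X i j k + tprod n l (ttrans l X) V i j k = 0)"
proof -
  obtain \<gamma> e where e: "e > 0" and g0: "\<gamma> 0 = X" and gM: "\<forall>t\<in>{-e<..<e}. \<gamma> t \<in> Stiefel n p l"
    and gd: "\<And>i j k. ((\<lambda>t. \<gamma> t i j k) has_real_derivative V i j k) (at 0)"
    using V unfolding tangent_space_def by blast
  have "tens n p l V" unfolding tens_def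
  proof (intro allI impI)
    fix i j k assume h: "n \<le> i \<or> p \<le> j \<or> l \<le> k"
    have "\<forall>t\<in>{-e<..<e}. \<gamma> t i j k = 0" using gM h unfolding Stiefel_def tens_def by auto
    thus "V i j k = 0" using deriv_locconst[OF e _ gd] by blast
  qed
  moreover have "tprod n l (ttrans l V) X i j k + tprod n l (ttrans l X) V i j k = 0" for i j k
  proof -
    have d: "((\<lambda>t. tprod n l (ttrans l (\<gamma> t)) (\<gamma> t) i j k) has_real_derivative
        tadd (tprod n l (ttrans l V) (\<gamma> 0)) (tprod n l (ttrans l (\<gamma> 0)) V) i j k) (at 0)"
      by (intro tprod_deriv ttrans_deriv gd)
    have "\<forall>t\<in>{-e<..<e}. tprod n l (ttrans l (\<gamma> t)) (\<gamma> t) i j k = tident p i j k"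
      using gM unfolding Stiefel_def by auto
    from deriv_locconst[OF e this d] show ?thesis unfolding g0 tadd_def by simp
  qed
  ultimately show ?thesis by blast
qed

lemma curve:
  assumes l: "1 \<le> l" and X: "X \<in> Stiefel n p l" and A: "tens n n l A"
    and skew: "ttrans l A = (\<lambda>i j k. - A i j k)"
  shows "tprod n l A X \<in> tangent_space (Stiefel n p l) X"
proof -
  have Xt: "tens n p l X" and XX: "tprod n l (ttrans l X) X = tident p" using X unfolding Stiefel_def by auto
  define \<gamma> where "\<gamma> = (\<lambda>t. tprod n l (Eexp n l A t) X)"
  have g0: "\<gamma> 0 = X" unfolding \<gamma>_def Eexp_zero
    by (rule tident_left[OF l tens_slc[OF Xt]]) (use Xt in \<open>auto simp: tens_def\<close>)
  have dg: "((\<lambda>t. \<gamma> t i j k) has_real_derivative tprod n l A (\<gamma> t) i j k) (at t)" for t i j k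
  proof -
    have "((\<lambda>t. \<gamma> t i j k) has_real_derivative
        tadd (tprod n l (tprod n l A (Eexp n l A t)) X) (tprod n l (Eexp n l A t) (\<lambda>i j k. 0)) i j k) (at t)"
      unfolding \<gamma>_def by (intro tprod_deriv Eexp_deriv[OF A] DERIV_const)
    thus ?thesis unfolding tprod_zero_right tprod_assoc[OF l] \<gamma>_def by (simp add: tadd_def)
  qed
  have gt: "tens n p l (\<gamma> t)" for t
    unfolding \<gamma>_def by (rule tens_tprod) (use Eexp_rows[OF A] Xt in \<open>auto simp: tens_def\<close>)
  have F: "tprod n l (ttrans l (\<gamma> t)) (\<gamma> t) = tident p" for t
  proof (intro ext)
    fix i j k
    have "\<forall>x. ((\<lambda>t. tprod n l (ttrans l (\<gamma> t)) (\<gamma> t) i j k) has_real_derivative 0) (at x)"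
    proof
      fix x
      have d: "((\<lambda>t. tprod n l (ttrans l (\<gamma> t)) (\<gamma> t) i j k) has_real_derivative
        tadd (tprod n l (ttrans l (tprod n l A (\<gamma> x))) (\<gamma> x)) (tprod n l (ttrans l (\<gamma> x)) (tprod n l A (\<gamma> x))) i j k) (at x)"
        by (intro tprod_deriv ttrans_deriv dg)
      have "tprod n l (ttrans l (tprod n l A (\<gamma> x))) (\<gamma> x)
          = (\<lambda>i j k. - tprod n l (ttrans l (\<gamma> x)) (tprod n l A (\<gamma> x)) i j k)"
        unfolding ttrans_tprod[OF l] skew tprod_assoc[OF l] tprod_neg_left tprod_neg_right by simp
      with d show "((\<lambda>t. tprod n l (ttrans l (\<gamma> t)) (\<gamma> t) i j k) has_real_derivative 0) (at x)"
        by (simp add: tadd_def)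
    qed
    hence "tprod n l (ttrans l (\<gamma> t)) (\<gamma> t) i j k = tprod n l (ttrans l (\<gamma> 0)) (\<gamma> 0) i j k"
      by (rule DERIV_isconst_all)
    thus "tprod n l (ttrans l (\<gamma> t)) (\<gamma> t) i j k = tident p i j k" unfolding g0 XX .
  qed
  have sm: "smooth_on_interval 1 (\<lambda>t. \<gamma> t i j k)" for i j k
  proof (cases "k < l")
    case True
    have "smooth_on_interval 1 (\<lambda>t. \<Sum>s<l. \<Sum>q<n. Eexp n l A t i q ((k + l - s) mod l) * X q j s)"
      by (intro smooth_sum smooth_cmult Eexp_smooth[OF A]) auto
    thus ?thesis unfolding \<gamma>_def tprod_def using True by simp
  next
    case False thus ?thesis unfolding \<gamma>_def tprod_def by (simp add: smooth_const)
  qed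
  show ?thesis unfolding tangent_space_def
  proof (intro CollectI exI[of _ \<gamma>] exI[of _ "1::real"] conjI ballI allI)
    fix t show "\<gamma> t \<in> Stiefel n p l" unfolding Stiefel_def using gt F by simp
  next
    fix i j k show "smooth_on_interval 1 (\<lambda>t. \<gamma> t i j k)" by (rule sm)
  next
    fix i j k show "((\<lambda>t. \<gamma> t i j k) has_real_derivative tprod n l A X i j k) (at 0)"
      using dg[of i j k 0] unfolding g0 .
  qed (simp_all add: g0)
qed



lemma stiefel_facts:
  assumes "X \<in> Stiefel n p l"
  shows "tens n p l X" "tprod n l (ttrans l X) X = tident p"
    "\<forall>i j k. n \<le> i \<longrightarrow> X i j k = 0" "\<forall>i j k. p \<le> j \<longrightarrow> X i j k = 0" "slc l X"
  using assms unfolding Stiefel_def tens_def slc_def by auto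

lemma ttrans_rows: "\<forall>i j k. m \<le> j \<longrightarrow> X i j k = 0 \<Longrightarrow> \<forall>i j k. m \<le> i \<longrightarrow> ttrans l X i j k = 0"
  unfolding ttrans_def by auto
lemma ttrans_cols: "\<forall>i j k. m \<le> i \<longrightarrow> X i j k = 0 \<Longrightarrow> \<forall>i j k. m \<le> j \<longrightarrow> ttrans l X i j k = 0"
  unfolding ttrans_def by auto
lemma tprod_rows: "\<forall>i j k. m \<le> i \<longrightarrow> A i j k = 0 \<Longrightarrow> \<forall>i j k. m \<le> i \<longrightarrow> tprod p l A B i j k = (0::real)"
  unfolding tprod_def by auto
lemma tprod_cols: "\<forall>i j k. m \<le> j \<longrightarrow> B i j k = 0 \<Longrightarrow> \<forall>i j k. m \<le> j \<longrightarrow> tprod p l A B i j k = (0::real)"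
  unfolding tprod_def by auto
lemma tens_rows: "tens n p l A \<Longrightarrow> \<forall>i j k. n \<le> i \<longrightarrow> A i j k = 0" unfolding tens_def by auto
lemma tens_cols: "tens n p l A \<Longrightarrow> \<forall>i j k. p \<le> j \<longrightarrow> A i j k = 0" unfolding tens_def by auto

lemma T_tangent:
  assumes l: "1 \<le> l" and X: "X \<in> Stiefel n p l" and V: "tens n p l V"
    and cond: "\<forall>i j k. tprod n l (ttrans l V) X i j k + tprod n l (ttrans l X) V i j k = 0"
  shows "V \<in> tangent_space (Stiefel n p l) X"
proof -
  note Xf = stiefel_facts[OF X]
  define S where "S = tprod n l (ttrans l V) X"
  have XV: "tprod n l (ttrans l X) V = (\<lambda>i j k. - S i j k)"
    using cond unfolding S_def by (intro ext) (simp add: eq_neg_iff_add_eq_0 add.commute)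
  define T1 where "T1 = tprod p l V (ttrans l X)"
  define T2 where "T2 = tprod p l X (ttrans l V)"
  define T3 where "T3 = tprod p l (tprod p l X S) (ttrans l X)"
  define A where "A = tadd (tadd T1 (\<lambda>i j k. - T2 i j k)) T3"
  have t1: "tens n n l T1" unfolding T1_def
    by (rule tens_tprod[OF tens_rows[OF V] ttrans_cols[OF Xf(3)]])
  have t2: "tens n n l T2" unfolding T2_def
    by (rule tens_tprod[OF Xf(3) ttrans_cols[OF tens_rows[OF V]]])
  have t3: "tens n n l T3" unfolding T3_def
    by (rule tens_tprod[OF tprod_rows[OF Xf(3)] ttrans_cols[OF Xf(3)]])
  have At: "tens n n l A" using t1 t2 t3 unfolding A_def tens_def tadd_def by simp
  have "ttrans l S = tprod n l (ttrans l X) V"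
    unfolding S_def ttrans_tprod[OF l] ttrans_ttrans[OF tens_slc[OF V]] ..
  hence tS: "ttrans l S = (\<lambda>i j k. - S i j k)" unfolding XV .
  have tT1: "ttrans l T1 = T2" unfolding T1_def T2_def ttrans_tprod[OF l] ttrans_ttrans[OF Xf(5)] ..
  have tT2: "ttrans l T2 = T1" unfolding T1_def T2_def ttrans_tprod[OF l] ttrans_ttrans[OF tens_slc[OF V]] ..
  have tT3: "ttrans l T3 = (\<lambda>i j k. - T3 i j k)"
    unfolding T3_def ttrans_tprod[OF l] ttrans_ttrans[OF Xf(5)] tS tprod_neg_left tprod_neg_right
      tprod_assoc[OF l] ..
  have skew: "ttrans l A = (\<lambda>i j k. - A i j k)"
    unfolding A_def ttrans_add ttrans_neg tT1 tT2 tT3 by (intro ext) (simp add: tadd_def)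
  have XS_cols: "\<forall>i j k. p \<le> j \<longrightarrow> tprod p l X S i j k = 0"
    unfolding S_def by (intro tprod_cols Xf(4))
  have "tprod n l A X = V"
  proof -
    have a1: "tprod n l T1 X = V" unfolding T1_def tprod_assoc[OF l] Xf(2)
      by (rule tident_right[OF l tens_slc[OF V] tens_cols[OF V]])
    have a2: "tprod n l T2 X = tprod p l X S" unfolding T2_def tprod_assoc[OF l] S_def ..
    have S_cols: "\<forall>i j k. p \<le> j \<longrightarrow> S i j k = 0" unfolding S_def by (rule tprod_cols[OF Xf(4)])
    have S_slc: "slc l S" unfolding S_def by (rule slc_tprod)
    have a3: "tprod n l T3 X = tprod p l X S" unfolding T3_def tprod_assoc[OF l] Xf(2)
      tident_right[OF l S_slc S_cols] ..
    show ?thesis unfolding A_def tprod_add_left tprod_neg_left a1 a2 a3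
      by (intro ext) (simp add: tadd_def)
  qed
  with curve[OF l X At skew] show ?thesis by simp
qed

lemma RHS_T:
  assumes l: "1 \<le> l" and X: "X \<in> Stiefel n p l"
    and XXp: "tprod n l (ttrans l X) Xp = (\<lambda>i j k. 0)" and Xpr: "\<forall>i j k. n \<le> i \<longrightarrow> Xp i j k = 0"
    and W: "skew_tensor p l W" and B: "tens m p l B"
  shows "tens n p l (tadd (tprod p l X W) (tprod m l Xp B)) \<and>
    (\<forall>i j k. tprod n l (ttrans l (tadd (tprod p l X W) (tprod m l Xp B))) X i j k
       + tprod n l (ttrans l X) (tadd (tprod p l X W) (tprod m l Xp B)) i j k = 0)"
proof
  note Xf = stiefel_facts[OF X]
  have Wt: "tens p p l W" and Wsk: "ttrans l W = (\<lambda>i j k. - W i j k)" using W unfolding skew_tensor_def by auto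
  define V where "V = tadd (tprod p l X W) (tprod m l Xp B)"
  have t1: "tens n p l (tprod p l X W)" by (rule tens_tprod[OF Xf(3) tens_cols[OF Wt]])
  have t2: "tens n p l (tprod m l Xp B)" by (rule tens_tprod[OF Xpr tens_cols[OF B]])
  show "tens n p l (tadd (tprod p l X W) (tprod m l Xp B))" using t1 t2 unfolding tens_def tadd_def by simp
  have XV: "tprod n l (ttrans l X) V = W"
  proof -
    have "tprod n l (ttrans l X) V = tadd (tprod p l (tident p) W) (tprod m l (\<lambda>i j k. 0) B)"
      unfolding V_def tprod_add_right tprod_assoc[OF l, symmetric] Xf(2) XXp ..
    also have "\<dots> = W" unfolding tident_left[OF l tens_slc[OF Wt] tens_rows[OF Wt]] tprod_zero_left
      by (intro ext) (simp add: tadd_def)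
    finally show ?thesis .
  qed
  have VX: "tprod n l (ttrans l V) X = (\<lambda>i j k. - W i j k)"
  proof -
    have "tprod n l (ttrans l V) X = ttrans l (tprod n l (ttrans l X) V)"
      unfolding ttrans_tprod[OF l] ttrans_ttrans[OF Xf(5)] ..
    thus ?thesis unfolding XV Wsk .
  qed
  show "\<forall>i j k. tprod n l (ttrans l (tadd (tprod p l X W) (tprod m l Xp B))) X i j k
       + tprod n l (ttrans l X) (tadd (tprod p l X W) (tprod m l Xp B)) i j k = 0"
    using XV VX unfolding V_def by simp
qed

theorem mainTheorem2:
  fixes n p l :: nat and X :: "real tensor" and Xhat_perp :: "complex tensor"
  assumes "p \<le> n" and "1 \<le> l"
    and "X \<in> Stiefel n p l"
    and "tens n (n - p) l Xhat_perp"
    and "\<forall>k<l. colspace n (n - p) (\<lambda>i j. Xhat_perp i j k)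
                = orth_compl n (colspace n p (\<lambda>i j. DFT l X i j k))"
    and "\<forall>i j k. Im (iDFT l Xhat_perp i j k) = 0"
  shows "tangent_space (Stiefel n p l) X =
    {tadd (tprod p l X W) (tprod (n - p) l (\<lambda>i j k. Re (iDFT l Xhat_perp i j k)) B) | W B.
        skew_tensor p l W \<and> tens (n - p) p l B}"
proof -
  note l = assms(2) and X = assms(3) and Xh = assms(4) and col = assms(5) and im = assms(6)
  note Xf = stiefel_facts[OF X]
  define Xp where "Xp = (\<lambda>i j k. Re (iDFT l Xhat_perp i j k))"
  have XXp: "tprod n l (ttrans l X) Xp = (\<lambda>i j k. 0)"
    unfolding Xp_def by (rule F1[OF l Xf(1) Xh col im])
  have Xpr: "\<forall>i j k. n \<le> i \<longrightarrow> Xp i j k = 0"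
    using Xh unfolding Xp_def iDFT_def tens_def by auto
  show ?thesis unfolding Xp_def[symmetric]
  proof (intro set_eqI iffI)
    fix V assume "V \<in> tangent_space (Stiefel n p l) X"
    from tangent_nec[OF this] have Vt: "tens n p l V"
      and cond: "\<forall>i j k. tprod n l (ttrans l V) X i j k + tprod n l (ttrans l X) V i j k = 0" by auto
    define W where "W = tprod n l (ttrans l X) V"
    have Wt: "tens p p l W" unfolding W_def
      by (rule tens_tprod[OF ttrans_rows[OF Xf(4)] tens_cols[OF Vt]])
    have "ttrans l W = tprod n l (ttrans l V) X"
      unfolding W_def ttrans_tprod[OF l] ttrans_ttrans[OF Xf(5)] ..
    also have "\<dots> = (\<lambda>i j k. - W i j k)"
      using cond unfolding W_def by (intro ext) (simp add: eq_neg_iff_add_eq_0)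
    finally have Wsk: "skew_tensor p l W" using Wt unfolding skew_tensor_def by simp
    define U where "U = tadd V (\<lambda>i j k. - tprod p l X W i j k)"
    have Ut: "tens n p l U"
      using Vt tens_tprod[OF Xf(3) tens_cols[OF Wt], of l] unfolding U_def tens_def tadd_def by simp
    have XU: "tprod n l (ttrans l X) U = (\<lambda>i j k. 0)"
    proof -
      have "tprod n l (ttrans l X) U = tadd W (\<lambda>i j k. - tprod p l (tident p) W i j k)"
        unfolding U_def tprod_add_right tprod_neg_right tprod_assoc[OF l, symmetric] Xf(2) W_def ..
      also have "\<dots> = (\<lambda>i j k. 0)"
        unfolding tident_left[OF l tens_slc[OF Wt] tens_rows[OF Wt]] by (intro ext) (simp add: tadd_def)
      finally show ?thesis .
    qed
    obtain B where Bt: "tens (n - p) p l B" and XpB: "tprod (n - p) l Xp B = U"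
      using F2[OF l Xf(1) Xh col im Ut XU] unfolding Xp_def by blast
    have "V = tadd (tprod p l X W) (tprod (n - p) l Xp B)"
      unfolding XpB U_def by (intro ext) (simp add: tadd_def)
    thus "V \<in> {tadd (tprod p l X W) (tprod (n - p) l Xp B) | W B. skew_tensor p l W \<and> tens (n - p) p l B}"
      using Wsk Bt by blast
  next
    fix V assume "V \<in> {tadd (tprod p l X W) (tprod (n - p) l Xp B) | W B. skew_tensor p l W \<and> tens (n - p) p l B}"
    then obtain W B where V: "V = tadd (tprod p l X W) (tprod (n - p) l Xp B)"
      and W: "skew_tensor p l W" and B: "tens (n - p) p l B" by blast
    from RHS_T[OF l X XXp Xpr W B] have "tens n p l V"
      and "\<forall>i j k. tprod n l (ttrans l V) X i j k + tprod n l (ttrans l X) V i j k = 0"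
      unfolding V by auto
    thus "V \<in> tangent_space (Stiefel n p l) X" by (rule T_tangent[OF l X])
  qed
qed

end
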